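(* For each $\beta\in(1/2,1]$ there exists $\Lambda>0$ such that on the domain $\{(\theta,\lambda):0<\theta\le\Lambda,\ 0<\lambda\le1\}\subset\mathbb{R}^2$ the system $$\mathbf{H}(\theta,\lambda)=\mathbf{C}_\beta(1,\lambda\theta^{1-\beta})^\dagger-\Gamma_\beta\theta^{2\beta-1}\int_0^1\frac{\mathbf{D}\mathbf{N}(\mathbf{H}(\theta(1-y),\lambda))}{(1-y)^{2-2\beta}}\,dy^\beta$$ has a unique solution $\mathbf{H}=(H_1,H_2)^\dagger$ in the class of vector-functions with non-negative continuous components.
   Context: $\mathbf{D}=(D_{ij})_{i,j=1}^2$ is a fixed $2\times2$ matrix with positive entries; $\Gamma_\beta=1$ if $\beta=1$ and $\Gamma_\beta=\frac{\sin\pi\beta}{\pi\beta(1-\beta)}$ if $\beta\in(0,1)$; $\mathbf{C}_\beta=\begin{pmatrix}D_{11}\beta\Gamma_\beta&D_{12}\\ D_{21}\beta\Gamma_\beta&D_{22}\end{pmatrix}$; $\mathbf{N}(\mathbf{x})=(N_1(\mathbf{x}),N_2(\mathbf{x}))^\dagger$ with $N_i(\mathbf{x})=\frac12\sum_{j,k=1}^2b^i_{jk}x_jx_k$ for fixed nonnegative finite constants $b^i_{jk}=b^i_{kj}$ (in the paper, second factorial moments of the offspring laws of a two-type branching process, and $\mathbf{D}$ the matrix built there from mean offspring numbers and mean life-lengths). *)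

theory Defs
  imports "HOL-Analysis.Analysis"
begin

definition Gam :: "real \<Rightarrow> real" where
  "Gam \<beta> = (if \<beta> = 1 then 1 else sin (pi * \<beta>) / (pi * \<beta> * (1 - \<beta>)))"

definition Cmat :: "real^2^2 \<Rightarrow> real \<Rightarrow> real^2^2" where
  "Cmat D \<beta> = (\<chi> i j. if j = 1 then D $ i $ j * \<beta> * Gam \<beta> else D $ i $ j)"

text \<open>N_i(x) = 1/2 * sum_{j,k} b^i_{jk} x_j x_k, with b i j k standing for b^i_{jk}.\<close>
definition Nvec :: "(2 \<Rightarrow> 2 \<Rightarrow> 2 \<Rightarrow> real) \<Rightarrow> real^2 \<Rightarrow> real^2" where
  "Nvec b x = (\<chi> i. (1/2) * (\<Sum>j\<in>UNIV. \<Sum>k\<in>UNIV. b i j k * x $ j * x $ k))"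

definition Dom :: "real \<Rightarrow> (real \<times> real) set" where
  "Dom \<Lambda> = {(\<theta>, l). 0 < \<theta> \<and> \<theta> \<le> \<Lambda> \<and> 0 < l \<and> l \<le> 1}"

text \<open>H solves the integral system on Dom Lambda. The Stieltjes integral
  int_0^1 f(y) d(y^beta) is written as int_0^1 f(y) * beta * y^(beta-1) dy.\<close>
definition solves :: "real^2^2 \<Rightarrow> (2 \<Rightarrow> 2 \<Rightarrow> 2 \<Rightarrow> real) \<Rightarrow> real \<Rightarrow> real \<Rightarrow>
    (real \<times> real \<Rightarrow> real^2) \<Rightarrow> bool" where
  "solves D b \<beta> \<Lambda> H \<longleftrightarrow>
     (\<forall>(\<theta>, l) \<in> Dom \<Lambda>. \<exists>I.
        ((\<lambda>y. (\<beta> * y powr (\<beta> - 1) / (1 - y) powr (2 - 2 * \<beta>)) *\<^sub>R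
                (D *v Nvec b (H (\<theta> * (1 - y), l)))) has_integral I) {0..1} \<and>
        H (\<theta>, l) = Cmat D \<beta> *v vector [1, l * \<theta> powr (1 - \<beta>)]
                      - (Gam \<beta> * \<theta> powr (2 * \<beta> - 1)) *\<^sub>R I)"

definition admissible :: "real \<Rightarrow> (real \<times> real \<Rightarrow> real^2) \<Rightarrow> bool" where
  "admissible \<Lambda> H \<longleftrightarrow> continuous_on (Dom \<Lambda>) H \<and> (\<forall>p \<in> Dom \<Lambda>. \<forall>i. 0 \<le> H p $ i)"

end

theory Submission imports Defs begin
definition wt :: "real \<Rightarrow> real \<Rightarrow> real" where
  "wt \<beta> y = \<beta> * y powr (\<beta> - 1) / (1 - y) powr (2 - 2 * \<beta>)"

lemma wt_nonneg: "0 \<le> \<beta> \<Longrightarrow> 0 \<le> wt \<beta> y"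
  unfolding wt_def by simp

lemma wt_int: assumes "1/2 < \<beta>" shows "wt \<beta> integrable_on {0..1}"
proof -
  have "(\<lambda>t. t powr (\<beta> - 1) * (1 - t) powr ((2*\<beta>-1) - 1)) integrable_on {0..1}"
    by (rule integrable_Beta') (use assms in auto)
  from integrable_cmul[OF this, of \<beta>]
  have "(\<lambda>t. \<beta> * (t powr (\<beta> - 1) * (1 - t) powr ((2*\<beta>-1) - 1))) integrable_on {0..1}"
    by simp
  then show ?thesis
  proof (rule integrable_eq)
    fix y :: real assume y: "y \<in> {0..1}"
    show "\<beta> * (y powr (\<beta> - 1) * (1 - y) powr ((2*\<beta>-1) - 1)) = wt \<beta> y"
    proof (cases "y = 1")
      case True then show ?thesis by (simp add: wt_def)
    next
      case False
      then have "1 - y > 0" using y by auto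
      then have "(1 - y) powr ((2*\<beta>-1) - 1) = 1 / (1 - y) powr (2 - 2 * \<beta>)"
        by (simp add: powr_minus_divide[symmetric] algebra_simps)
      then show ?thesis by (simp add: wt_def)
    qed
  qed
qed

lemma bil: "bilinear (\<lambda>(v::real^2) (a::real). a *\<^sub>R v)"
  unfolding bilinear_def linear_iff by (simp add: algebra_simps)

lemma prod_int:
  assumes "1/2 < \<beta>" "continuous_on {0..1} V" "\<And>y. y \<in> {0..1} \<Longrightarrow> norm (V y :: real^2) \<le> B"
  shows "(\<lambda>y. wt \<beta> y *\<^sub>R V y) integrable_on {0..1}"
proof -
  have "wt \<beta> absolutely_integrable_on {0..1}"
    using wt_int[OF assms(1)] assms(1) wt_nonneg[of \<beta>]
    by (subst absolutely_integrable_on_iff_nonneg) auto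
  moreover have "V \<in> borel_measurable (lebesgue_on {0..1})"
    by (rule continuous_imp_measurable_on_sets_lebesgue[OF assms(2)]) auto
  moreover have "bounded (V ` {0..1})"
    using assms(3) unfolding bounded_iff by blast
  ultimately have "(\<lambda>y. wt \<beta> y *\<^sub>R V y) absolutely_integrable_on {0..1}"
    using absolutely_integrable_bounded_measurable_product[OF bil, of V "{0..1}" "wt \<beta>"] by auto
  then show ?thesis using set_lebesgue_integral_eq_integral(1) by blast
qed

lemma wt_one[simp]: "wt \<beta> 1 = 0" by (simp add: wt_def)

lemma param_cont:
  fixes F :: "real \<times> real \<Rightarrow> real \<Rightarrow> real^2"
  assumes b: "1/2 < \<beta>"
   and cont: "\<And>y. y \<in> {0..1} \<Longrightarrow> continuous_on UNIV (\<lambda>z. F z y)"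
   and conty: "\<And>z. continuous_on {0..1} (F z)"
   and bnd: "\<And>z y. y \<in> {0..1} \<Longrightarrow> norm (F z y) \<le> B"
  shows "continuous_on UNIV (\<lambda>z. integral {0..1} (\<lambda>y. wt \<beta> y *\<^sub>R F z y))"
proof (rule continuous_on_sequentiallyI)
  fix u a assume lim: "u \<longlonglongrightarrow> (a::real\<times>real)"
  show "(\<lambda>n. integral {0..1} (\<lambda>y. wt \<beta> y *\<^sub>R F (u n) y)) \<longlonglongrightarrow> integral {0..1} (\<lambda>y. wt \<beta> y *\<^sub>R F a y)"
  proof (rule dominated_convergence(2))
    show "(\<lambda>y. wt \<beta> y *\<^sub>R F (u k) y) integrable_on {0..1}" for k
      by (rule prod_int[OF b conty bnd])
    show "(\<lambda>y. wt \<beta> y * B) integrable_on {0..1}"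
      using integrable_on_cmult_right[OF wt_int[OF b], where c=B] by simp
    show "norm (wt \<beta> y *\<^sub>R F (u k) y) \<le> wt \<beta> y * B" if "y \<in> {0..1}" for k y
      using b wt_nonneg[of \<beta> y] bnd[OF that, of "u k"] by (auto intro: mult_left_mono)
    show "(\<lambda>k. wt \<beta> y *\<^sub>R F (u k) y) \<longlonglongrightarrow> wt \<beta> y *\<^sub>R F a y" if "y \<in> {0..1}" for y
    proof (rule tendsto_scaleR[OF tendsto_const])
      have "isCont (\<lambda>z. F z y) a" using cont[OF that] continuous_on_eq_continuous_at by blast
      then show "(\<lambda>k. F (u k) y) \<longlonglongrightarrow> F a y"
        using lim isCont_tendsto_compose by blast
    qed
  qed
qed

lemma int_comp_nonneg:
  assumes "(\<lambda>y. wt \<beta> y *\<^sub>R V y) integrable_on {0..1}" "0 \<le> \<beta>"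
    "\<And>y. y \<in> {0..<1} \<Longrightarrow> 0 \<le> (V y :: real^2) $ i"
  shows "0 \<le> integral {0..1} (\<lambda>y. wt \<beta> y *\<^sub>R V y) $ i"
proof -
  have "0 \<le> integral {0..1} (\<lambda>y. (wt \<beta> y *\<^sub>R V y) $ i)"
  proof (rule integral_nonneg)
    show "(\<lambda>y. (wt \<beta> y *\<^sub>R V y) $ i) integrable_on {0..1}"
      using integrable_linear[OF assms(1) bounded_linear_vec_nth[of i]] by (simp add: o_def)
    show "0 \<le> (wt \<beta> y *\<^sub>R V y) $ i" if "y \<in> {0..1}" for y
      using that assms(2) assms(3)[of y] wt_nonneg[of \<beta> y] by (cases "y = 1") auto
  qed
  also have "\<dots> = integral {0..1} (\<lambda>y. wt \<beta> y *\<^sub>R V y) $ i"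
    by (rule integral_component_eq_cart[OF assms(1)])
  finally show ?thesis .
qed

lemma int_norm:
  assumes "(\<lambda>y. wt \<beta> y *\<^sub>R V y) integrable_on {0..1}" "1/2 < \<beta>"
    "\<And>y. y \<in> {0..<1} \<Longrightarrow> norm (V y :: real^2) \<le> B"
  shows "norm (integral {0..1} (\<lambda>y. wt \<beta> y *\<^sub>R V y)) \<le> integral {0..1} (wt \<beta>) * B"
proof -
  have "norm (integral {0..1} (\<lambda>y. wt \<beta> y *\<^sub>R V y)) \<le> integral {0..1} (\<lambda>y. wt \<beta> y * B)"
  proof (rule integral_norm_bound_integral[OF assms(1)])
    show "(\<lambda>y. wt \<beta> y * B) integrable_on {0..1}"
      using integrable_on_cmult_right[OF wt_int[OF assms(2)], where c=B] by simp
    show "norm (wt \<beta> y *\<^sub>R V y) \<le> wt \<beta> y * B" if "y \<in> {0..1}" for y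
      using that assms(2) assms(3)[of y] wt_nonneg[of \<beta> y] by (cases "y = 1") (auto intro: mult_left_mono)
  qed
  also have "\<dots> = integral {0..1} (wt \<beta>) * B"
    by simp
  finally show ?thesis .
qed

definition Mv :: "real^2^2 \<Rightarrow> (2 \<Rightarrow> 2 \<Rightarrow> 2 \<Rightarrow> real) \<Rightarrow> real^2 \<Rightarrow> real^2" where
  "Mv D b x = D *v Nvec b x"

lemma Mv_nonneg:
  assumes "\<forall>i j. 0 \<le> D $ i $ j" "\<forall>i j k. 0 \<le> b i j k" "\<forall>i. 0 \<le> x $ i"
  shows "0 \<le> Mv D b x $ i"
  using assms by (auto simp: Mv_def Nvec_def matrix_vector_mult_def intro!: sum_nonneg mult_nonneg_nonneg)

lemma Mv_zero: "Mv D b 0 = 0"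
proof -
  have "Nvec b 0 = 0" by (simp add: Nvec_def vec_eq_iff)
  then show ?thesis by (simp add: Mv_def)
qed

lemma Nvec_cont: "continuous_on S f \<Longrightarrow> continuous_on S (\<lambda>x. Nvec b (f x))"
  unfolding Nvec_def
  by (intro continuous_intros continuous_on_vec_lambda) (auto intro: linear_continuous_on bounded_linear_vec_nth continuous_on_compose2[OF linear_continuous_on[OF bounded_linear_vec_nth]])

lemma Mv_cont: "continuous_on S f \<Longrightarrow> continuous_on S (\<lambda>x. Mv D b (f x))"
  unfolding Mv_def
  by (rule continuous_on_compose2[OF linear_continuous_on[OF matrix_vector_mul_bounded_linear] Nvec_cont]) auto

lemma prod_bound:
  fixes x y :: "real^2"
  assumes "norm x \<le> A" "norm y \<le> A"
  shows "\<bar>x$j*x$k - y$j*y$k\<bar> \<le> 2*A*norm(x-y)"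
proof -
  have e: "x$j*x$k - y$j*y$k = x$j*(x-y)$k + y$k*(x-y)$j" by (simp add: algebra_simps)
  have "\<bar>x$j*(x-y)$k\<bar> \<le> A * norm(x-y)"
    unfolding abs_mult by (intro mult_mono) (use assms component_le_norm_cart[of x j] component_le_norm_cart[of "x-y" k] in auto)
  moreover have "\<bar>y$k*(x-y)$j\<bar> \<le> A * norm(x-y)"
    unfolding abs_mult by (intro mult_mono) (use assms component_le_norm_cart[of y k] component_le_norm_cart[of "x-y" j] in auto)
  ultimately show ?thesis unfolding e by linarith
qed

lemma Nvec_lip:
  fixes x y :: "real^2"
  assumes "norm x \<le> A" "norm y \<le> A"
  shows "\<bar>Nvec b x $ i - Nvec b y $ i\<bar> \<le> (\<Sum>j\<in>UNIV. \<Sum>k\<in>UNIV. \<bar>b i j k\<bar>) * A * norm(x-y)"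
proof -
  have "Nvec b x $ i - Nvec b y $ i = (1/2) * (\<Sum>j\<in>UNIV. \<Sum>k\<in>UNIV. b i j k * (x$j*x$k - y$j*y$k))"
    by (simp add: Nvec_def sum_subtractf[symmetric] algebra_simps)
  also have "\<bar>\<dots>\<bar> = (1/2) * \<bar>\<Sum>j\<in>UNIV. \<Sum>k\<in>UNIV. b i j k * (x$j*x$k - y$j*y$k)\<bar>"
    by simp
  also have "\<dots> \<le> (1/2) * (\<Sum>j\<in>UNIV. \<Sum>k\<in>UNIV. \<bar>b i j k\<bar> * (2*A*norm(x-y)))"
    apply (rule mult_left_mono[OF _ ])
     apply (rule order_trans[OF sum_abs], rule sum_mono)
     apply (rule order_trans[OF sum_abs], rule sum_mono)
    unfolding abs_mult by (auto intro: mult_left_mono prod_bound[OF assms])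
  also have "\<dots> = (\<Sum>j\<in>UNIV. \<Sum>k\<in>UNIV. \<bar>b i j k\<bar>) * A * norm(x-y)"
    by (simp add: sum_distrib_right sum_distrib_left algebra_simps)
  finally show ?thesis .
qed

lemma matvec_bound:
  fixes D :: "real^2^2"
  shows "norm (D *v z) \<le> (\<Sum>i\<in>UNIV. \<Sum>j\<in>UNIV. \<bar>D$i$j\<bar>) * norm z"
proof -
  have "norm (D *v z) \<le> (\<Sum>i\<in>UNIV. \<bar>(D *v z)$i\<bar>)" by (rule norm_le_l1_cart)
  also have "\<dots> \<le> (\<Sum>i\<in>UNIV. \<Sum>j\<in>UNIV. \<bar>D$i$j\<bar> * norm z)"
    unfolding matrix_vector_mult_def
    by (intro sum_mono, simp, rule order_trans[OF sum_abs], rule sum_mono)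
       (auto simp: abs_mult intro: mult_left_mono component_le_norm_cart)
  also have "\<dots> = (\<Sum>i\<in>UNIV. \<Sum>j\<in>UNIV. \<bar>D$i$j\<bar>) * norm z"
    by (simp add: sum_distrib_right)
  finally show ?thesis .
qed

lemma Mv_lip:
  fixes x y :: "real^2"
  assumes "norm x \<le> A" "norm y \<le> A"
  shows "norm (Mv D b x - Mv D b y) \<le>
     (\<Sum>i\<in>UNIV. \<Sum>j\<in>UNIV. \<bar>D$i$j\<bar>) * ((\<Sum>i\<in>UNIV. \<Sum>j\<in>UNIV. \<Sum>k\<in>UNIV. \<bar>b i j k\<bar>) * A) * norm(x-y)"
proof -
  have n: "norm (Nvec b x - Nvec b y) \<le> (\<Sum>i\<in>UNIV. \<Sum>j\<in>UNIV. \<Sum>k\<in>UNIV. \<bar>b i j k\<bar>) * A * norm(x-y)"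
  proof -
    have "norm (Nvec b x - Nvec b y) \<le> (\<Sum>i\<in>UNIV. \<bar>(Nvec b x - Nvec b y)$i\<bar>)" by (rule norm_le_l1_cart)
    also have "\<dots> \<le> (\<Sum>i\<in>UNIV. (\<Sum>j\<in>UNIV. \<Sum>k\<in>UNIV. \<bar>b i j k\<bar>) * A * norm(x-y))"
      by (intro sum_mono) (simp add: Nvec_lip[OF assms])
    also have "\<dots> = (\<Sum>i\<in>UNIV. \<Sum>j\<in>UNIV. \<Sum>k\<in>UNIV. \<bar>b i j k\<bar>) * A * norm(x-y)"
      by (simp add: sum_distrib_right)
    finally show ?thesis .
  qed
  have "norm (Mv D b x - Mv D b y) = norm (D *v (Nvec b x - Nvec b y))"
    by (simp add: Mv_def matrix_vector_mult_diff_distrib)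
  also have "\<dots> \<le> (\<Sum>i\<in>UNIV. \<Sum>j\<in>UNIV. \<bar>D$i$j\<bar>) * norm (Nvec b x - Nvec b y)"
    by (rule matvec_bound)
  also have "\<dots> \<le> (\<Sum>i\<in>UNIV. \<Sum>j\<in>UNIV. \<bar>D$i$j\<bar>) * ((\<Sum>i\<in>UNIV. \<Sum>j\<in>UNIV. \<Sum>k\<in>UNIV. \<bar>b i j k\<bar>) * A * norm(x-y))"
    by (intro mult_left_mono n) (auto intro: sum_nonneg)
  finally show ?thesis by (simp add: mult.assoc)
qed

lemma Cmat_vec: "(Cmat D \<beta> *v vector [1, t]) $ i = D$i$1 * \<beta> * Gam \<beta> + D$i$2 * (t::real)"
  by (simp add: Cmat_def matrix_vector_mult_def sum_2)

lemma Gam_pos: assumes "1/2 < \<beta>" "\<beta> \<le> 1" shows "0 < Gam \<beta>"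
proof (cases "\<beta> = 1")
  case True then show ?thesis by (simp add: Gam_def)
next
  case False
  then have "\<beta> < 1" using assms by auto
  have "0 < sin (pi * \<beta>)" by (rule sin_gt_zero) (use assms \<open>\<beta> < 1\<close> in auto)
  moreover have "0 < pi * \<beta> * (1 - \<beta>)" using assms \<open>\<beta> < 1\<close> by auto
  ultimately show ?thesis using False by (simp add: Gam_def)
qed

theorem lemma9:
  fixes D :: "real^2^2" and b :: "2 \<Rightarrow> 2 \<Rightarrow> 2 \<Rightarrow> real" and \<beta> :: real
  assumes "\<forall>i j. 0 < D $ i $ j"
    and "\<forall>i j k. 0 \<le> b i j k"
    and "\<forall>i j k. b i j k = b i k j"
    and "1/2 < \<beta>" and "\<beta> \<le> 1"
  shows "\<exists>\<Lambda>>0. \<exists>H. admissible \<Lambda> H \<and> solves D b \<beta> \<Lambda> H \<and>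
           (\<forall>H'. admissible \<Lambda> H' \<and> solves D b \<beta> \<Lambda> H' \<longrightarrow> (\<forall>p \<in> Dom \<Lambda>. H' p = H p))"
proof -
  have Dpos: "\<And>i j. 0 < D $ i $ j" using assms(1) by auto
  have Dnn: "\<forall>i j. 0 \<le> D $ i $ j" using assms(1) by (auto intro: less_imp_le)
  have bnn: "\<forall>i j k. 0 \<le> b i j k" using assms(2) by auto
  have b12: "1/2 < \<beta>" "\<beta> \<le> 1" using assms by auto
  define \<Gamma> where "\<Gamma> = Gam \<beta>"
  have \<Gamma>pos: "0 < \<Gamma>" unfolding \<Gamma>_def by (rule Gam_pos[OF b12])
  define Ds where "Ds = (\<Sum>i\<in>UNIV. \<Sum>j\<in>UNIV. \<bar>D$i$j\<bar>)"
  define Bs where "Bs = (\<Sum>i\<in>UNIV. \<Sum>j\<in>UNIV. \<Sum>k\<in>UNIV. \<bar>b i j k\<bar>)"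
  define R where "R = (\<beta>*\<Gamma> + 1) * Ds"
  define A where "A = 2*R"
  define K where "K = Ds * (Bs * A)"
  define W where "W = integral {0..1} (wt \<beta>)"
  define c0 where "c0 = \<Gamma> * W * K"
  define m where "m = \<beta>*\<Gamma>*min (D$1$1) (D$2$1)"
  define \<alpha> where "\<alpha> = 2*\<beta>-1"
  define e where "e = min (m / (c0*A + 1)) (1/(2*c0 + 2))"
  define \<Lambda> where "\<Lambda> = min 1 (e powr (1/\<alpha>))"
  have Ds0: "0 \<le> Ds" unfolding Ds_def by (intro sum_nonneg) auto
  have Bs0: "0 \<le> Bs" unfolding Bs_def by (intro sum_nonneg) auto
  have R0: "0 \<le> R" unfolding R_def using Ds0 b12 \<Gamma>pos by simp
  have A0: "0 \<le> A" unfolding A_def using R0 by simp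
  have K0: "0 \<le> K" unfolding K_def using Ds0 Bs0 A0 by simp
  have W0: "0 \<le> W" unfolding W_def
    by (rule integral_nonneg[OF wt_int[OF b12(1)]]) (use b12 wt_nonneg in auto)
  have c00: "0 \<le> c0" unfolding c0_def using \<Gamma>pos W0 K0 by simp
  have m0: "0 < m" unfolding m_def using \<Gamma>pos b12 Dpos by simp
  have \<alpha>0: "0 < \<alpha>" unfolding \<alpha>_def using b12 by simp
  have e0: "0 < e" unfolding e_def using m0 c00 A0 by (simp add: add_nonneg_pos)
  have e1: "e * c0 * A \<le> m"
  proof -
    have "e * (c0 * A) \<le> m / (c0*A + 1) * (c0 * A)"
      unfolding e_def by (intro mult_right_mono) (use c00 A0 in auto)
    also have "\<dots> \<le> m"
    proof -
      have p: "0 \<le> c0*A" using c00 A0 by simp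
      then have "(c0*A)/(c0*A+1) \<le> 1" by simp
      then have "m * ((c0*A)/(c0*A+1)) \<le> m * 1" using m0 by (intro mult_left_mono) auto
      then show ?thesis by simp
    qed
    finally show ?thesis by (simp add: mult.assoc)
  qed
  have e2: "e * c0 \<le> 1/2"
  proof -
    have "e * c0 \<le> 1/(2*c0 + 2) * c0"
      unfolding e_def by (intro mult_right_mono) (use c00 in auto)
    also have "\<dots> \<le> 1/2" using c00 by (simp add: field_simps)
    finally show ?thesis .
  qed
  have \<Lambda>0: "0 < \<Lambda>" unfolding \<Lambda>_def using e0 by simp
  have \<Lambda>1: "\<Lambda> \<le> 1" unfolding \<Lambda>_def by simp
  have powe: "\<theta> powr \<alpha> \<le> e" if "0 \<le> \<theta>" "\<theta> \<le> \<Lambda>" for \<theta>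
  proof -
    have "\<theta> powr \<alpha> \<le> \<Lambda> powr \<alpha>" by (rule powr_mono2) (use that \<alpha>0 in auto)
    also have "\<dots> \<le> (e powr (1/\<alpha>)) powr \<alpha>" by (rule powr_mono2) (use \<alpha>0 \<Lambda>0 in \<open>auto simp: \<Lambda>_def\<close>)
    also have "\<dots> = e" using \<alpha>0 e0 by (simp add: powr_powr)
    finally show ?thesis .
  qed
  have Dle: "D$i$j \<le> Ds" for i j
  proof -
    have "\<bar>D$i$j\<bar> \<le> (\<Sum>j\<in>UNIV. \<bar>D$i$j\<bar>)" by (rule member_le_sum) auto
    also have "\<dots> \<le> Ds" unfolding Ds_def by (rule member_le_sum[of i UNIV "\<lambda>i. \<Sum>j\<in>UNIV. \<bar>D$i$j\<bar>"]) (auto intro: sum_nonneg)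
    finally show ?thesis by simp
  qed
  have mle: "m \<le> D$i$1 * \<beta> * \<Gamma>" for i
  proof -
    have "min (D$1$1) (D$2$1) \<le> D$i$1" using exhaust_2[of i] by auto
    then show ?thesis unfolding m_def using b12 \<Gamma>pos by (simp add: mult.commute mult.left_commute)
  qed
  define Bx where "Bx = cbox (0::real^2) (vec R)"
  have inBx: "x \<in> Bx \<longleftrightarrow> (\<forall>i. 0 \<le> x$i \<and> x$i \<le> R)" for x
    unfolding Bx_def mem_box_cart by simp
  have Bxn: "norm x \<le> A" if "x \<in> Bx" for x
  proof -
    have "norm x \<le> (\<Sum>i\<in>UNIV. \<bar>x$i\<bar>)" by (rule norm_le_l1_cart)
    also have "\<dots> \<le> A" using that unfolding inBx A_def sum_2
      by (metis (no_types) abs_of_nonneg add_mono mult_2)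
    finally show ?thesis .
  qed
  have MvBx: "norm (Mv D b x - Mv D b y) \<le> K * norm (x - y)" if "x \<in> Bx" "y \<in> Bx" for x y
    using Mv_lip[OF Bxn[OF that(1)] Bxn[OF that(2)], of D b] unfolding K_def Ds_def Bs_def
    by (simp add: mult.assoc)
  have zBx: "0 \<in> Bx" using R0 by (simp add: inBx)
  have MvBn: "norm (Mv D b x) \<le> K * A" if "x \<in> Bx" for x
  proof -
    have "norm (Mv D b x) \<le> K * norm x" using MvBx[OF that zBx] by (simp add: Mv_zero)
    also have "\<dots> \<le> K * A" by (rule mult_left_mono[OF Bxn[OF that] K0])
    finally show ?thesis .
  qed
  define pw where "pw \<theta> = (if \<beta> = 1 then 1 else \<theta> powr (1-\<beta>))" for \<theta> :: real
  have pw01: "0 \<le> pw \<theta> \<and> pw \<theta> \<le> 1" if "0 \<le> \<theta>" "\<theta> \<le> 1" for \<theta>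
  proof (cases "\<beta> = 1")
    case False
    have "\<theta> powr (1-\<beta>) \<le> 1 powr (1-\<beta>)" by (rule powr_mono2) (use that b12 in auto)
    then show ?thesis using False by (simp add: pw_def)
  qed (simp add: pw_def)
  have pwpos: "pw \<theta> = \<theta> powr (1-\<beta>)" if "0 < \<theta>" for \<theta>
    using that by (simp add: pw_def)
  define Cv where "Cv \<theta> l = (\<chi> i. D$i$1*\<beta>*\<Gamma> + D$i$2*(l * pw \<theta>))" for \<theta> l :: real
  have Cvb: "m \<le> Cv \<theta> l $ i \<and> Cv \<theta> l $ i \<le> R" if "0 \<le> \<theta>" "\<theta> \<le> \<Lambda>" "0 \<le> l" "l \<le> 1" for \<theta> l i
  proof -
    have p: "0 \<le> l * pw \<theta> \<and> l * pw \<theta> \<le> 1"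
      using pw01[of \<theta>] that \<Lambda>1 by (auto intro: mult_le_one)
    have "D$i$2*(l * pw \<theta>) \<le> Ds * 1" by (intro mult_mono) (use p Dle Ds0 Dnn in auto)
    moreover have "D$i$1*\<beta>*\<Gamma> \<le> Ds*\<beta>*\<Gamma>" by (intro mult_right_mono Dle) (use b12 \<Gamma>pos in auto)
    moreover have "0 \<le> D$i$2*(l * pw \<theta>)" using p Dnn by simp
    ultimately show ?thesis using mle[of i] unfolding Cv_def R_def by (simp add: algebra_simps)
  qed
  define \<Psi> where "\<Psi> G \<theta> l = Cv \<theta> l - (\<Gamma> * \<theta> powr \<alpha>) *\<^sub>R
      integral {0..1} (\<lambda>y. wt \<beta> y *\<^sub>R Mv D b (G (\<theta>*(1-y), l)))"
    for G :: "real \<times> real \<Rightarrow> real^2" and \<theta> l :: real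
  have up: "\<Psi> G \<theta> l $ i \<le> R"
    if "0 \<le> \<theta>" "\<theta> \<le> \<Lambda>" "0 \<le> l" "l \<le> 1"
      "(\<lambda>y. wt \<beta> y *\<^sub>R Mv D b (G (\<theta>*(1-y), l))) integrable_on {0..1}"
      "\<And>y j. y \<in> {0..<1} \<Longrightarrow> 0 \<le> G (\<theta>*(1-y), l) $ j" for G \<theta> l i
  proof -
    have I: "0 \<le> integral {0..1} (\<lambda>y. wt \<beta> y *\<^sub>R Mv D b (G (\<theta>*(1-y), l))) $ i"
      by (rule int_comp_nonneg[OF that(5)]) (use b12 in \<open>auto intro!: Mv_nonneg Dnn bnn that(6)\<close>)
    have "0 \<le> \<Gamma> * \<theta> powr \<alpha>" using \<Gamma>pos by simp
    with I have "0 \<le> (\<Gamma> * \<theta> powr \<alpha>) * integral {0..1} (\<lambda>y. wt \<beta> y *\<^sub>R Mv D b (G (\<theta>*(1-y), l))) $ i"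
      by simp
    then show ?thesis using Cvb[OF that(1-4), of i] unfolding \<Psi>_def by simp
  qed
  have low: "0 \<le> \<Psi> G \<theta> l $ i"
    if "0 \<le> \<theta>" "\<theta> \<le> \<Lambda>" "0 \<le> l" "l \<le> 1"
      "(\<lambda>y. wt \<beta> y *\<^sub>R Mv D b (G (\<theta>*(1-y), l))) integrable_on {0..1}"
      "\<And>y. y \<in> {0..<1} \<Longrightarrow> G (\<theta>*(1-y), l) \<in> Bx" for G \<theta> l i
  proof -
    let ?I = "integral {0..1} (\<lambda>y. wt \<beta> y *\<^sub>R Mv D b (G (\<theta>*(1-y), l)))"
    have "norm ?I \<le> W * (K * A)" unfolding W_def
      by (rule int_norm[OF that(5) b12(1)]) (use MvBn that(6) in auto)
    then have "?I $ i \<le> W * (K * A)" using component_le_norm_cart[of ?I i] by linarith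
    moreover have "\<Gamma> * \<theta> powr \<alpha> \<le> \<Gamma> * e" using powe[OF that(1,2)] \<Gamma>pos by simp
    ultimately have "(\<Gamma> * \<theta> powr \<alpha>) * ?I $ i \<le> (\<Gamma> * e) * (W * (K * A))"
      by (intro order_trans[OF mult_left_mono mult_right_mono]) (use \<Gamma>pos W0 K0 A0 e0 in auto)
    also have "\<dots> = e * c0 * A" unfolding c0_def by (simp add: algebra_simps)
    also have "\<dots> \<le> m" by (rule e1)
    finally show ?thesis using Cvb[OF that(1-4), of i] unfolding \<Psi>_def by simp
  qed
  have dif: "norm (\<Psi> G1 \<theta> l - \<Psi> G2 \<theta> l) \<le> d / 2"
    if "0 \<le> \<theta>" "\<theta> \<le> \<Lambda>"
      "(\<lambda>y. wt \<beta> y *\<^sub>R Mv D b (G1 (\<theta>*(1-y), l))) integrable_on {0..1}"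
      "(\<lambda>y. wt \<beta> y *\<^sub>R Mv D b (G2 (\<theta>*(1-y), l))) integrable_on {0..1}"
      "\<And>y. y \<in> {0..<1} \<Longrightarrow> G1 (\<theta>*(1-y), l) \<in> Bx"
      "\<And>y. y \<in> {0..<1} \<Longrightarrow> G2 (\<theta>*(1-y), l) \<in> Bx"
      "\<And>y. y \<in> {0..<1} \<Longrightarrow> norm (G1 (\<theta>*(1-y), l) - G2 (\<theta>*(1-y), l)) \<le> d"
    for G1 G2 \<theta> l d
  proof -
    have d0: "0 \<le> d" using that(7)[of 0] by (simp add: order_trans[OF norm_ge_zero])
    let ?I1 = "integral {0..1} (\<lambda>y. wt \<beta> y *\<^sub>R Mv D b (G1 (\<theta>*(1-y), l)))"
    let ?I2 = "integral {0..1} (\<lambda>y. wt \<beta> y *\<^sub>R Mv D b (G2 (\<theta>*(1-y), l)))"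
    have "?I2 - ?I1 = integral {0..1} (\<lambda>y. wt \<beta> y *\<^sub>R Mv D b (G2 (\<theta>*(1-y), l)) - wt \<beta> y *\<^sub>R Mv D b (G1 (\<theta>*(1-y), l)))"
      by (rule integral_diff[OF that(4,3), symmetric])
    also have "\<dots> = integral {0..1} (\<lambda>y. wt \<beta> y *\<^sub>R (Mv D b (G2 (\<theta>*(1-y), l)) - Mv D b (G1 (\<theta>*(1-y), l))))"
      by (simp add: scaleR_diff_right)
    finally have eq: "?I2 - ?I1 = \<dots>" .
    have intd: "(\<lambda>y. wt \<beta> y *\<^sub>R (Mv D b (G2 (\<theta>*(1-y), l)) - Mv D b (G1 (\<theta>*(1-y), l)))) integrable_on {0..1}"
      using integrable_diff[OF that(4,3)] by (simp add: scaleR_diff_right)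
    have "norm (?I2 - ?I1) \<le> W * (K * d)" unfolding eq W_def
    proof (rule int_norm[OF intd b12(1)])
      fix y :: real assume y: "y \<in> {0..<1}"
      have "norm (Mv D b (G2 (\<theta>*(1-y), l)) - Mv D b (G1 (\<theta>*(1-y), l))) \<le> K * norm (G2 (\<theta>*(1-y), l) - G1 (\<theta>*(1-y), l))"
        by (rule MvBx[OF that(6)[OF y] that(5)[OF y]])
      also have "\<dots> \<le> K * d" using that(7)[OF y] K0 by (simp add: norm_minus_commute mult_left_mono)
      finally show "norm (Mv D b (G2 (\<theta>*(1-y), l)) - Mv D b (G1 (\<theta>*(1-y), l))) \<le> K * d" .
    qed
    have "\<Psi> G1 \<theta> l - \<Psi> G2 \<theta> l = (\<Gamma> * \<theta> powr \<alpha>) *\<^sub>R (?I2 - ?I1)"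
      unfolding \<Psi>_def by (simp add: scaleR_diff_right)
    then have "norm (\<Psi> G1 \<theta> l - \<Psi> G2 \<theta> l) = (\<Gamma> * \<theta> powr \<alpha>) * norm (?I2 - ?I1)"
      using \<Gamma>pos by simp
    also have "\<dots> \<le> (\<Gamma> * e) * (W * (K * d))"
      by (intro mult_mono) (use powe[OF that(1,2)] \<Gamma>pos e0 \<open>norm (?I2 - ?I1) \<le> W * (K * d)\<close> in auto)
    also have "\<dots> = (e * c0) * d" unfolding c0_def by (simp add: algebra_simps)
    also have "\<dots> \<le> (1/2) * d" by (rule mult_right_mono[OF e2 d0])
    finally show ?thesis by simp
  qed
  define cl1 where "cl1 \<theta> = max 0 (min \<Lambda> \<theta>)" for \<theta> :: real
  define cl2 where "cl2 l = max 0 (min 1 l)" for l :: real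
  define \<Phi> where "\<Phi> G p = \<Psi> G (cl1 (fst p)) (cl2 (snd p))" for G :: "real \<times> real \<Rightarrow> real^2" and p :: "real \<times> real"
  define S where "S = PiC (UNIV :: (real \<times> real) set) (\<lambda>_. Bx)"
  have inS: "G \<in> S \<longleftrightarrow> (\<forall>p. apply_bcontfun G p \<in> Bx)" for G
    unfolding S_def mem_PiC_iff Pi_iff by simp
  have cl1b: "0 \<le> cl1 \<theta> \<and> cl1 \<theta> \<le> \<Lambda>" for \<theta> using \<Lambda>0 by (auto simp: cl1_def)
  have cl2b: "0 \<le> cl2 l \<and> cl2 l \<le> 1" for l by (auto simp: cl2_def)
  have Gcont: "continuous_on X (\<lambda>z. apply_bcontfun G (f z))" if "continuous_on X f" for X f G
    by (rule continuous_on_compose2[OF continuous_on_apply_bcontfun[of UNIV G] that]) auto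
  have intG: "(\<lambda>y. wt \<beta> y *\<^sub>R Mv D b (apply_bcontfun G (\<theta>*(1-y), l))) integrable_on {0..1}"
    if "G \<in> S" for G \<theta> l
  proof (rule prod_int[OF b12(1)])
    show "continuous_on {0..1} (\<lambda>y. Mv D b (apply_bcontfun G (\<theta>*(1-y), l)))"
      by (intro Mv_cont Gcont continuous_intros)
    show "norm (Mv D b (apply_bcontfun G (\<theta>*(1-y), l))) \<le> K * A" for y
      using MvBn that inS by blast
  qed
  have PhiBx: "\<Phi> (apply_bcontfun G) p \<in> Bx" if "G \<in> S" for G p
    unfolding inBx \<Phi>_def
  proof
    fix i
    show "0 \<le> \<Psi> G (cl1 (fst p)) (cl2 (snd p)) $ i \<and> \<Psi> G (cl1 (fst p)) (cl2 (snd p)) $ i \<le> R"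
    proof
      show "0 \<le> \<Psi> G (cl1 (fst p)) (cl2 (snd p)) $ i"
        by (rule low) (use cl1b cl2b intG[OF that] that inS in auto)
      show "\<Psi> G (cl1 (fst p)) (cl2 (snd p)) $ i \<le> R"
        by (rule up) (use cl1b cl2b intG[OF that] that inS inBx in auto)
    qed
  qed
  have c1: "continuous_on UNIV (\<lambda>p::real\<times>real. cl1 (fst p))" unfolding cl1_def by (intro continuous_intros)
  have c2: "continuous_on UNIV (\<lambda>p::real\<times>real. cl2 (snd p))" unfolding cl2_def by (intro continuous_intros)
  have cpw: "continuous_on UNIV (\<lambda>p::real\<times>real. pw (cl1 (fst p)))"
  proof (cases "\<beta> = 1")
    case True then show ?thesis by (simp add: pw_def)
  next
    case False
    have "continuous_on UNIV (\<lambda>p::real\<times>real. cl1 (fst p) powr (1-\<beta>))"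
      by (rule continuous_on_powr'[OF c1 continuous_on_const]) (use cl1b b12 False in auto)
    then show ?thesis using False by (simp add: pw_def)
  qed
  have cpa: "continuous_on UNIV (\<lambda>p::real\<times>real. \<Gamma> * cl1 (fst p) powr \<alpha>)"
    by (intro continuous_on_mult_left continuous_on_powr'[OF c1 continuous_on_const]) (use cl1b \<alpha>0 in auto)
  have cCv: "continuous_on UNIV (\<lambda>p::real\<times>real. Cv (cl1 (fst p)) (cl2 (snd p)))"
    unfolding Cv_def by (intro continuous_on_vec_lambda continuous_on_add continuous_on_const continuous_on_mult c2 cpw)
  have PhiC: "continuous_on UNIV (\<Phi> (apply_bcontfun G))" if "G \<in> S" for G
  proof -
    have cI: "continuous_on UNIV (\<lambda>p. integral {0..1} (\<lambda>y. wt \<beta> y *\<^sub>R Mv D b (apply_bcontfun G (cl1 (fst p)*(1-y), cl2 (snd p)))))"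
    proof (rule param_cont[OF b12(1)])
      show "continuous_on UNIV (\<lambda>z. Mv D b (apply_bcontfun G (cl1 (fst z)*(1-y), cl2 (snd z))))" for y
        by (intro Mv_cont Gcont continuous_on_Pair continuous_on_mult_right c1 c2)
      show "continuous_on {0..1} (\<lambda>y. Mv D b (apply_bcontfun G (cl1 (fst z)*(1-y), cl2 (snd z))))" for z
        by (intro Mv_cont Gcont continuous_intros)
      show "norm (Mv D b (apply_bcontfun G (cl1 (fst z)*(1-y), cl2 (snd z)))) \<le> K * A" for z y
        using MvBn that inS by blast
    qed
    show ?thesis unfolding \<Phi>_def \<Psi>_def
      by (intro continuous_on_diff continuous_on_scaleR cCv cpa cI)
  qed
  have PhiB: "\<Phi> (apply_bcontfun G) \<in> bcontfun" if "G \<in> S" for G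
  proof -
    have rng: "range (\<Phi> (apply_bcontfun G)) \<subseteq> Bx" using PhiBx[OF that] by auto
    have "bounded Bx" by (simp add: Bx_def)
    from bounded_subset[OF this rng] PhiC[OF that] show ?thesis unfolding bcontfun_def by simp
  qed
  define T where "T G = Bcontfun (\<Phi> (apply_bcontfun G))" for G :: "(real \<times> real) \<Rightarrow>\<^sub>C (real^2)"
  have Tapp: "apply_bcontfun (T G) = \<Phi> (apply_bcontfun G)" if "G \<in> S" for G
    unfolding T_def by (rule Bcontfun_inverse[OF PhiB[OF that]])
  have TS: "T ` S \<subseteq> S" using Tapp PhiBx inS by auto
  have Tlip: "dist (T G1) (T G2) \<le> 1/2 * dist G1 G2" if "G1 \<in> S" "G2 \<in> S" for G1 G2
  proof (rule dist_bound)
    fix p :: "real \<times> real"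
    have "norm (\<Psi> G1 (cl1 (fst p)) (cl2 (snd p)) - \<Psi> G2 (cl1 (fst p)) (cl2 (snd p))) \<le> dist G1 G2 / 2"
    proof (rule dif)
      show "norm (apply_bcontfun G1 (cl1 (fst p)*(1-y), cl2 (snd p)) - apply_bcontfun G2 (cl1 (fst p)*(1-y), cl2 (snd p))) \<le> dist G1 G2" for y
        using dist_bounded[of G1 _ G2] by (simp add: dist_norm)
    qed (use cl1b intG that inS in auto)
    then show "dist (T G1 p) (T G2 p) \<le> 1/2 * dist G1 G2"
      by (simp add: Tapp that dist_norm \<Phi>_def)
  qed
  have compl: "complete S" unfolding S_def complete_eq_closed
    by (rule closed_PiC) (simp add: Bx_def closed_cbox)
  have S0: "S \<noteq> {}" using inS[of 0] zBx by auto
  obtain G where GS: "G \<in> S" and TG: "T G = G"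
    using Banach_fix[OF compl S0, of "1/2" T] TS Tlip by auto
  have Gfix: "apply_bcontfun G p = \<Phi> (apply_bcontfun G) p" for p
    using Tapp[OF GS] TG by simp
  define H where "H = apply_bcontfun G"
  have HBx: "H p \<in> Bx" for p using GS inS[of G] unfolding H_def by blast
  have Hint: "(\<lambda>y. wt \<beta> y *\<^sub>R Mv D b (H (\<theta>*(1-y), l))) integrable_on {0..1}" for \<theta> l
    unfolding H_def by (rule intG[OF GS])
  have inDom: "(\<theta>, l) \<in> Dom \<Lambda> \<longleftrightarrow> 0 < \<theta> \<and> \<theta> \<le> \<Lambda> \<and> 0 < l \<and> l \<le> 1" for \<theta> l
    by (simp add: Dom_def)
  have onDom: "H (\<theta>, l) = \<Psi> H \<theta> l" if "(\<theta>, l) \<in> Dom \<Lambda>" for \<theta> l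
  proof -
    have "cl1 \<theta> = \<theta>" "cl2 l = l" using that by (auto simp: inDom cl1_def cl2_def)
    then show ?thesis using Gfix[of "(\<theta>, l)"] unfolding H_def \<Phi>_def by simp
  qed
  have Cveq: "Cv \<theta> l = Cmat D \<beta> *v vector [1, l * \<theta> powr (1-\<beta>)]" if "0 < \<theta>" for \<theta> l
    by (simp add: vec_eq_iff Cv_def Cmat_vec pwpos[OF that] \<Gamma>_def)
  have inner: "(\<theta>*(1-y), l) \<in> Dom \<Lambda>" if "(\<theta>, l) \<in> Dom \<Lambda>" "y \<in> {0..<1}" for \<theta> l y
  proof -
    have h: "\<theta>*(1-y) \<le> \<theta> * 1" using that by (intro mult_left_mono) (auto simp: inDom)
    have h2: "\<theta>*(1-y) \<le> \<Lambda>" by (rule order_trans[OF h]) (use that in \<open>auto simp: inDom\<close>)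
    show ?thesis using h2 that by (auto simp: inDom)
  qed
  have adm: "admissible \<Lambda> H"
    unfolding admissible_def using HBx inBx by (auto simp: H_def intro: continuous_on_apply_bcontfun)
  have sol: "solves D b \<beta> \<Lambda> H"
    unfolding solves_def
  proof (clarify)
    fix \<theta> l assume q: "(\<theta>, l) \<in> Dom \<Lambda>"
    let ?I = "integral {0..1} (\<lambda>y. wt \<beta> y *\<^sub>R Mv D b (H (\<theta>*(1-y), l)))"
    have "((\<lambda>y. wt \<beta> y *\<^sub>R Mv D b (H (\<theta>*(1-y), l))) has_integral ?I) {0..1}"
      by (rule integrable_integral[OF Hint])
    moreover have "H (\<theta>, l) = Cmat D \<beta> *v vector [1, l * \<theta> powr (1 - \<beta>)] - (Gam \<beta> * \<theta> powr (2 * \<beta> - 1)) *\<^sub>R ?I"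
      using onDom[OF q] Cveq[of \<theta> l] q unfolding \<Psi>_def \<Gamma>_def \<alpha>_def by (simp add: inDom)
    ultimately show "\<exists>I. ((\<lambda>y. (\<beta> * y powr (\<beta> - 1) / (1 - y) powr (2 - 2 * \<beta>)) *\<^sub>R
                (D *v Nvec b (H (\<theta> * (1 - y), l)))) has_integral I) {0..1} \<and>
        H (\<theta>, l) = Cmat D \<beta> *v vector [1, l * \<theta> powr (1 - \<beta>)]
                      - (Gam \<beta> * \<theta> powr (2 * \<beta> - 1)) *\<^sub>R I"
      unfolding wt_def Mv_def by blast
  qed
  have uniq: "\<forall>p \<in> Dom \<Lambda>. H' p = H p" if admH': "admissible \<Lambda> H'" and solH': "solves D b \<beta> \<Lambda> H'" for H'
  proof -
    have solq: "\<exists>I. ((\<lambda>y. wt \<beta> y *\<^sub>R Mv D b (H' (\<theta>*(1-y), l))) has_integral I) {0..1} \<and>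
        H' (\<theta>, l) = Cmat D \<beta> *v vector [1, l * \<theta> powr (1 - \<beta>)] - (\<Gamma> * \<theta> powr \<alpha>) *\<^sub>R I"
      if "(\<theta>, l) \<in> Dom \<Lambda>" for \<theta> l
      using solH' that unfolding solves_def wt_def Mv_def \<Gamma>_def \<alpha>_def by fast
    have H'int: "(\<lambda>y. wt \<beta> y *\<^sub>R Mv D b (H' (\<theta>*(1-y), l))) integrable_on {0..1}"
      and H'eq: "H' (\<theta>, l) = \<Psi> H' \<theta> l" if qd0: "(\<theta>, l) \<in> Dom \<Lambda>" for \<theta> l
    proof -
      obtain I where I: "((\<lambda>y. wt \<beta> y *\<^sub>R Mv D b (H' (\<theta>*(1-y), l))) has_integral I) {0..1}"
        and e: "H' (\<theta>, l) = Cmat D \<beta> *v vector [1, l * \<theta> powr (1 - \<beta>)] - (\<Gamma> * \<theta> powr \<alpha>) *\<^sub>R I"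
        using solq[OF qd0] by blast
      show "(\<lambda>y. wt \<beta> y *\<^sub>R Mv D b (H' (\<theta>*(1-y), l))) integrable_on {0..1}"
        using I by blast
      have "I = integral {0..1} (\<lambda>y. wt \<beta> y *\<^sub>R Mv D b (H' (\<theta>*(1-y), l)))"
        using I by (simp add: integral_unique)
      then show "H' (\<theta>, l) = \<Psi> H' \<theta> l"
        using e Cveq[of \<theta> l] qd0 unfolding \<Psi>_def by (simp add: inDom)
    qed
    have H'nn: "0 \<le> H' q $ i" if "q \<in> Dom \<Lambda>" for q i
      using admH' that unfolding admissible_def by blast
    have H'Bx: "H' q \<in> Bx" if "q \<in> Dom \<Lambda>" for q
    proof -
      obtain \<theta> l where q: "q = (\<theta>, l)" by (cases q)
      have qd: "(\<theta>, l) \<in> Dom \<Lambda>" using that q by simp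
      have "H' (\<theta>, l) $ i \<le> R" for i
        unfolding H'eq[OF qd]
        by (rule up) (use qd H'int[OF qd] H'nn inner[OF qd] in \<open>auto simp: inDom\<close>)
      then show ?thesis using H'nn[OF that] q inBx by auto
    qed
    have bnd: "norm (H' q - H q) \<le> 2 * A" if "q \<in> Dom \<Lambda>" for q
      using norm_triangle_ineq4[of "H' q" "H q"] Bxn[OF H'Bx[OF that]] Bxn[OF HBx[of q]] by simp
    define d where "d = (SUP q\<in>Dom \<Lambda>. norm (H' q - H q))"
    have bdd: "bdd_above ((\<lambda>q. norm (H' q - H q)) ` Dom \<Lambda>)"
      by (rule bdd_aboveI2[where M="2 * A"]) (rule bnd)
    have le_d: "norm (H' q - H q) \<le> d" if "q \<in> Dom \<Lambda>" for q
      unfolding d_def by (rule cSUP_upper[OF that bdd])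
    have each: "norm (H' q - H q) \<le> d / 2" if "q \<in> Dom \<Lambda>" for q
    proof -
      obtain \<theta> l where q: "q = (\<theta>, l)" by (cases q)
      have qd: "(\<theta>, l) \<in> Dom \<Lambda>" using that q by simp
      have "norm (\<Psi> H' \<theta> l - \<Psi> H \<theta> l) \<le> d / 2"
        by (rule dif) (use qd H'int[OF qd] Hint HBx H'Bx inner[OF qd] le_d inner[OF qd] in \<open>auto simp: inDom\<close>)
      then show ?thesis using q H'eq[OF qd] onDom[OF qd] by simp
    qed
    have ne: "Dom \<Lambda> \<noteq> {}" using \<Lambda>0 inDom[of \<Lambda> 1] by auto
    have "d \<le> d / 2" unfolding d_def by (rule cSUP_least[OF ne]) (use each d_def in auto)
    moreover have "0 \<le> d" using le_d[of "(\<Lambda>, 1)"] \<Lambda>0 inDom[of \<Lambda> 1] by (auto intro: order_trans[OF norm_ge_zero])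
    ultimately have "d = 0" by simp
    then show ?thesis using le_d by auto
  qed
  show ?thesis using \<Lambda>0 adm sol uniq by blast
qed
end
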